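(* Let $n$ and $m$ be positive integers, let $\mathcal{X}_1, \dots, \mathcal{X}_m$ be vector spaces over a field $\mathbb{F}$, and let $x_a = x_{a,1}\otimes\cdots\otimes x_{a,m}$, $a\in\{1,\dots,n\}$, be linearly independent product vectors (all $x_{a,j}\in\mathcal{X}_j$ non-zero). If there exist non-zero scalars $\alpha_1, \dots, \alpha_n \in \mathbb{F} \setminus \{0\}$ such that $\sum_{a =1}^n \alpha_a x_a$ is a product vector, then $\dim \operatorname{span} \{ x_{a, j}: a \in \{1,\dots,n\}\} >1$ for at most $n-1$ indices $j \in \{1,\dots,m\}$.
   Context: A product vector in $\mathcal{X}_1\otimes\cdots\otimes\mathcal{X}_m$ is a vector $x_1\otimes\cdots\otimes x_m$ with all $x_j$ non-zero (in particular, a product vector is non-zero). *)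

theory Defs
  imports Complex_Main "HOL-Library.Function_Algebras"
begin

text \<open>Model: each space X_j is realised as a subspace of the coordinate space 'b => 'a
 (every vector space over 'a embeds into such a space). The tensor product
 X_1 (x) ... (x) X_m is realised inside the functions (nat => 'b) => 'a, the product vector
 v_1 (x) ... (x) v_m being the function f |-> prod_{j=1..m} v_j (f j). The natural map from
 the algebraic tensor product into this function space is injective, so this is faithful.\<close>

definition fscale :: "'a::field \<Rightarrow> ('x \<Rightarrow> 'a) \<Rightarrow> ('x \<Rightarrow> 'a)" where
  "fscale c f = (\<lambda>x. c * f x)"

lemma vector_space_fscale: "vector_space (fscale :: 'a::field \<Rightarrow> ('x \<Rightarrow> 'a) \<Rightarrow> _)"
  by unfold_locales (auto simp: fscale_def algebra_simps fun_eq_iff)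

definition tensor :: "nat \<Rightarrow> (nat \<Rightarrow> 'b \<Rightarrow> 'a::field) \<Rightarrow> ((nat \<Rightarrow> 'b) \<Rightarrow> 'a)" where
  "tensor m v = (\<lambda>f. \<Prod>j\<in>{1..m}. v j (f j))"

definition product_vector :: "nat \<Rightarrow> ((nat \<Rightarrow> 'b) \<Rightarrow> 'a::field) \<Rightarrow> bool" where
  "product_vector m z \<longleftrightarrow> (\<exists>v. (\<forall>j\<in>{1..m}. v j \<noteq> 0) \<and> z = tensor m v)"

definition lin_indep_family :: "'i set \<Rightarrow> ('i \<Rightarrow> 'x \<Rightarrow> 'a::field) \<Rightarrow> bool" where
  "lin_indep_family I v \<longleftrightarrow>
     (\<forall>c. (\<Sum>i\<in>I. fscale (c i) (v i)) = 0 \<longrightarrow> (\<forall>i\<in>I. c i = 0))"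

end

theory Submission imports Defs begin

definition lc :: "('i \<Rightarrow> 'x \<Rightarrow> 'a::field) \<Rightarrow> 'i set \<Rightarrow> ('i \<Rightarrow> 'a) \<Rightarrow> 'x \<Rightarrow> 'a" where
  "lc T X c = (\<lambda>f. \<Sum>a\<in>X. c a * T a f)"

definition par :: "('x \<Rightarrow> 'a::field) \<Rightarrow> ('x \<Rightarrow> 'a) \<Rightarrow> bool" where
  "par u w \<longleftrightarrow> (\<exists>c. u = (\<lambda>x. c * w x))"

definition conn :: "'i set \<Rightarrow> ('i \<Rightarrow> 'x \<Rightarrow> 'a::field) \<Rightarrow> bool" where
  "conn A T \<longleftrightarrow> (\<forall>A1\<subseteq>A. A1 \<noteq> {} \<longrightarrow> A1 \<noteq> A \<longrightarrow>
      (\<exists>g. g \<noteq> 0 \<and> (\<exists>c. g = lc T A1 c) \<and> (\<exists>d. g = lc T (A - A1) d)))"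

definition indep :: "('i \<Rightarrow> 'x \<Rightarrow> 'a::field) \<Rightarrow> 'i set \<Rightarrow> bool" where
  "indep T X \<longleftrightarrow> (\<forall>c. lc T X c = 0 \<longrightarrow> (\<forall>b\<in>X. c b = 0))"

definition Sset :: "nat \<Rightarrow> ('i \<Rightarrow> nat \<Rightarrow> 'b \<Rightarrow> 'a::field) \<Rightarrow> 'i set \<Rightarrow> nat set" where
  "Sset m v A = {j\<in>{1..m}. \<exists>a\<in>A. \<exists>b\<in>A. \<not> par (v a j) (v b j)}"

lemma tensor_Suc: "tensor (Suc k) v f = tensor k v f * v (Suc k) (f (Suc k))"
  by (simp add: tensor_def atLeastAtMostSuc_conv mult.commute)

lemma tensor_upd: "tensor k v (f(Suc k := t)) = tensor k v f"
  unfolding tensor_def by (rule prod.cong) auto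

lemma tensor_Suc_upd: "tensor (Suc k) v (f(Suc k := t)) = tensor k v f * v (Suc k) t"
  by (simp add: tensor_Suc tensor_upd)

lemma tensor_nonzero:
  assumes "\<forall>j\<in>{1..m}. v j \<noteq> (0::'b \<Rightarrow> 'a::field)"
  shows "tensor m v \<noteq> 0"
proof
  assume h: "tensor m v = 0"
  define f where "f = (\<lambda>j. SOME b. v j b \<noteq> 0)"
  have "\<forall>j\<in>{1..m}. v j (f j) \<noteq> 0"
  proof
    fix j assume "j \<in> {1..m}"
    then have "\<exists>b. v j b \<noteq> 0" using assms by (auto simp: fun_eq_iff)
    then show "v j (f j) \<noteq> 0" unfolding f_def by (rule someI_ex)
  qed
  then have "tensor m v f \<noteq> 0" by (simp add: tensor_def)
  with h show False by simp
qed

lemma lc_upd: "lc (\<lambda>a. tensor (Suc k) (v a)) X c (f(Suc k := t)) =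
   lc (\<lambda>a. tensor k (v a)) X (\<lambda>a. c a * v a (Suc k) t) f"
  by (simp add: lc_def tensor_Suc_upd mult_ac)

lemma lc_subst:
  assumes "finite X" "finite Y" "\<forall>a\<in>X. H a = lc H Y (\<gamma> a)"
  shows "lc H X c = lc H Y (\<lambda>b. \<Sum>a\<in>X. c a * \<gamma> a b)"
proof
  fix f
  have "lc H X c f = (\<Sum>a\<in>X. c a * (\<Sum>b\<in>Y. \<gamma> a b * H b f))"
    using assms(3) by (auto simp: lc_def intro!: sum.cong)
  also have "\<dots> = (\<Sum>a\<in>X. \<Sum>b\<in>Y. c a * \<gamma> a b * H b f)"
    by (simp add: sum_distrib_left mult_ac)
  also have "\<dots> = (\<Sum>b\<in>Y. \<Sum>a\<in>X. c a * \<gamma> a b * H b f)"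
    by (rule sum.swap)
  also have "\<dots> = lc H Y (\<lambda>b. \<Sum>a\<in>X. c a * \<gamma> a b) f"
    by (simp add: lc_def sum_distrib_right)
  finally show "lc H X c f = lc H Y (\<lambda>b. \<Sum>a\<in>X. c a * \<gamma> a b) f" .
qed

lemma lc_zero: "\<forall>b\<in>Y. e b = 0 \<Longrightarrow> lc H Y e = 0"
  by (simp add: lc_def fun_eq_iff)

lemma lc_remove:
  assumes "finite B" "b0 \<in> B" "lc H B c = 0" "c b0 \<noteq> 0"
  shows "lc H B g = lc H (B - {b0}) (\<lambda>b. g b - g b0 * c b / c b0)"
proof
  fix f
  have c0: "(\<Sum>b\<in>B - {b0}. c b * H b f) + c b0 * H b0 f = 0"
    using assms(3) sum.remove[OF assms(1,2), of "\<lambda>b. c b * H b f"]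
    by (simp add: lc_def fun_eq_iff add.commute)
  hence hb0: "H b0 f = - (\<Sum>b\<in>B - {b0}. c b * H b f) / c b0"
    using assms(4) by (simp add: field_simps eq_neg_iff_add_eq_0)
  have "lc H B g f = (\<Sum>b\<in>B - {b0}. g b * H b f) + g b0 * H b0 f"
    using sum.remove[OF assms(1,2), of "\<lambda>b. g b * H b f"] by (simp add: lc_def add.commute)
  also have "\<dots> = (\<Sum>b\<in>B - {b0}. g b * H b f) - (g b0 / c b0) * (\<Sum>b\<in>B - {b0}. c b * H b f)"
    using hb0 by (simp add: field_simps)
  also have "\<dots> = (\<Sum>b\<in>B - {b0}. (g b - g b0 * c b / c b0) * H b f)"
    by (simp add: sum_distrib_left sum_subtractf algebra_simps)
  finally show "lc H B g f = lc H (B - {b0}) (\<lambda>b. g b - g b0 * c b / c b0) f"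
    by (simp add: lc_def)
qed

lemma par_trans: "par u w \<Longrightarrow> par w z \<Longrightarrow> par u z"
  unfolding par_def by (auto simp: mult.assoc) (metis mult.assoc)

lemma par_sym: "par u w \<Longrightarrow> u \<noteq> 0 \<Longrightarrow> par w u"
proof -
  assume "par u w" "u \<noteq> 0"
  then obtain c where c: "u = (\<lambda>x. c * w x)" by (auto simp: par_def)
  with \<open>u \<noteq> 0\<close> have "c \<noteq> 0" by (auto simp: fun_eq_iff)
  hence "w = (\<lambda>x. inverse c * u x)" using c by (auto simp: fun_eq_iff)
  thus ?thesis by (auto simp: par_def)
qed

lemma par_refl: "par u u"
  unfolding par_def by (rule exI[of _ 1]) simp

lemma core:
  fixes v :: "'i \<Rightarrow> nat \<Rightarrow> 'b \<Rightarrow> 'a::field"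
  assumes "finite A" "A \<noteq> {}" "\<forall>a\<in>A. \<forall>j\<in>{1..m}. v a j \<noteq> 0"
    and "conn A (\<lambda>a. tensor m (v a))" and "B \<subseteq> A"
    and "\<forall>a\<in>A. \<exists>c. tensor m (v a) = lc (\<lambda>a. tensor m (v a)) B c"
  shows "card (Sset m v A) + 1 \<le> card B"
  using assms(3-6)
proof (induction m arbitrary: B)
  case 0
  from \<open>A \<noteq> {}\<close> obtain a where "a \<in> A" by blast
  with 0 obtain c where c: "tensor 0 (v a) = lc (\<lambda>a. tensor 0 (v a)) B c" by blast
  have "B \<noteq> {}"
  proof
    assume "B = {}"
    with c have "tensor 0 (v a) = (\<lambda>f. 0)" by (simp add: lc_def)
    thus False by (simp add: tensor_def fun_eq_iff)
  qed
  moreover have "finite B" using 0 \<open>finite A\<close> finite_subset by blast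
  ultimately show ?case by (simp add: Sset_def card_gt_0_iff Suc_le_eq)
next
  case (Suc k)
  define T where "T = (\<lambda>a. tensor (Suc k) (v a))"
  define H where "H = (\<lambda>a. tensor k (v a))"
  define w where "w = (\<lambda>a. v a (Suc k))"
  have TH: "T a (f(Suc k := t)) = H a f * w a t" for a f t
    by (simp add: T_def H_def w_def tensor_Suc_upd)
  have lcTH: "lc T X c (f(Suc k := t)) = lc H X (\<lambda>a. c a * w a t) f" for X c f t
    unfolding T_def H_def w_def by (rule lc_upd)
  have finB: "finite B" using Suc.prems(3) \<open>finite A\<close> finite_subset by blast
  have nz: "\<forall>a\<in>A. \<forall>j\<in>{1..k}. v a j \<noteq> 0" using Suc.prems(1) by (metis atLeastAtMost_iff le_SucI)
  have wnz: "w a \<noteq> 0" if "a \<in> A" for a using Suc.prems(1) that unfolding w_def by (metis atLeastAtMost_iff le_refl Suc_le_mono le0 One_nat_def)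
  have Hnz: "H a \<noteq> 0" if "a \<in> A" for a
    unfolding H_def by (rule tensor_nonzero) (use nz that in auto)
  have connH: "conn A H"
    unfolding conn_def
  proof (intro allI impI)
    fix A1 assume A1: "A1 \<subseteq> A" "A1 \<noteq> {}" "A1 \<noteq> A"
    from Suc.prems(2) A1 obtain g c d where g: "g \<noteq> 0" "g = lc T A1 c" "g = lc T (A - A1) d"
      unfolding conn_def T_def by blast
    then obtain f0 where f0: "g f0 \<noteq> 0" by (auto simp: fun_eq_iff)
    define t where "t = f0 (Suc k)"
    define h where "h = lc H A1 (\<lambda>a. c a * w a t)"
    have h1: "h f = g (f(Suc k := t))" for f using g(2) lcTH by (simp add: h_def)
    have "h = lc H (A - A1) (\<lambda>a. d a * w a t)"
    proof
      fix f show "h f = lc H (A - A1) (\<lambda>a. d a * w a t) f"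
        using h1 g(3) lcTH by simp
    qed
    moreover have "h \<noteq> 0"
    proof
      assume "h = 0"
      hence "h f0 = 0" by simp
      with h1 have "g (f0(Suc k := t)) = 0" by simp
      with f0 show False by (simp add: t_def)
    qed
    ultimately show "\<exists>g. g \<noteq> 0 \<and> (\<exists>c. g = lc H A1 c) \<and> (\<exists>d. g = lc H (A - A1) d)"
      unfolding h_def by blast
  qed
  have spanH: "\<exists>c. H a = lc H B c" if "a \<in> A" for a
  proof -
    from Suc.prems(4) that obtain \<beta> where \<beta>: "T a = lc T B \<beta>" unfolding T_def by blast
    from wnz[OF that] obtain t where t: "w a t \<noteq> 0" by (auto simp: fun_eq_iff)
    have "H a = lc H B (\<lambda>b. \<beta> b * w b t / w a t)"
    proof
      fix f
      have "H a f * w a t = lc H B (\<lambda>b. \<beta> b * w b t) f"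
        using \<beta> TH[of a f t] lcTH[of B \<beta> f t] by simp
      hence "H a f = lc H B (\<lambda>b. \<beta> b * w b t) f / w a t"
        using t by (simp add: field_simps)
      thus "H a f = lc H B (\<lambda>b. \<beta> b * w b t / w a t) f"
        by (simp add: lc_def sum_divide_distrib)
    qed
    thus ?thesis by blast
  qed
  have Ssub: "Sset (Suc k) v A \<subseteq> insert (Suc k) (Sset k v A)"
    by (auto simp: Sset_def)
  have finS: "finite (Sset k v A)" by (simp add: Sset_def)
  show ?case
  proof (cases "Suc k \<in> Sset (Suc k) v A")
    case False
    hence "Sset (Suc k) v A \<subseteq> Sset k v A" using Ssub by blast
    hence "card (Sset (Suc k) v A) \<le> card (Sset k v A)" using finS card_mono by blast
    moreover have "card (Sset k v A) + 1 \<le> card B"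
      using Suc.IH[OF nz _ Suc.prems(3)] connH spanH by (simp add: H_def)
    ultimately show ?thesis by simp
  next
    case True
    have "\<not> indep H B"
    proof
      assume ind: "indep H B"
      from spanH obtain \<gamma> where \<gamma>: "\<forall>a\<in>A. H a = lc H B (\<gamma> a)" by metis
      from Suc.prems(4) obtain \<beta> where \<beta>: "\<forall>a\<in>A. T a = lc T B (\<beta> a)" unfolding T_def by metis
      have parw: "par (w a) (w b)" if "a \<in> A" "b \<in> B" "\<gamma> a b \<noteq> 0" for a b
      proof -
        have eq: "\<gamma> a b * w a t = \<beta> a b * w b t" for t
        proof -
          have "lc H B (\<lambda>b. \<gamma> a b * w a t - \<beta> a b * w b t) = 0"
          proof
            fix f
            have "lc H B (\<lambda>b. \<gamma> a b * w a t - \<beta> a b * w b t) f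
                = w a t * lc H B (\<gamma> a) f - lc H B (\<lambda>b. \<beta> a b * w b t) f"
              by (simp add: lc_def sum_subtractf sum_distrib_left algebra_simps)
            also have "\<dots> = w a t * H a f - T a (f(Suc k := t))"
              using bspec[OF \<gamma> that(1)] bspec[OF \<beta> that(1)] lcTH[of B "\<beta> a" f t] by metis
            also have "\<dots> = 0" using TH by simp
            finally show "lc H B (\<lambda>b. \<gamma> a b * w a t - \<beta> a b * w b t) f = 0 f" by simp
          qed
          from ind[unfolded indep_def, rule_format, OF this that(2)] show ?thesis by simp
        qed
        have "w a = (\<lambda>t. (\<beta> a b / \<gamma> a b) * w b t)"
        proof
          fix t show "w a t = \<beta> a b / \<gamma> a b * w b t"
            using eq[of t] that(3) by (simp add: field_simps)
        qed
        thus ?thesis unfolding par_def by blast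
      qed
      have exb: "\<exists>b\<in>B. \<gamma> a b \<noteq> 0" if "a \<in> A" for a
      proof (rule ccontr)
        assume "\<not> (\<exists>b\<in>B. \<gamma> a b \<noteq> 0)"
        hence "lc H B (\<gamma> a) = 0" by (intro lc_zero) auto
        with bspec[OF \<gamma> that] Hnz[OF that] show False by simp
      qed
      from True obtain a1 a2 where a12: "a1 \<in> A" "a2 \<in> A" "\<not> par (w a1) (w a2)"
        by (auto simp: Sset_def w_def)
      from exb[OF a12(1)] obtain b0 where b0: "b0 \<in> B" by blast
      define A1 where "A1 = {a\<in>A. par (w a) (w b0)}"
      have b0A: "b0 \<in> A" using b0 Suc.prems(3) by blast
      have "A1 \<noteq> {}" using b0A par_refl by (auto simp: A1_def)
      moreover have "A1 \<noteq> A"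
      proof
        assume "A1 = A"
        hence "par (w a1) (w b0)" "par (w a2) (w b0)" using a12 by (auto simp: A1_def)
        moreover have "par (w b0) (w a2)" using par_sym[OF _ wnz[OF a12(2)]] \<open>par (w a2) (w b0)\<close> by blast
        ultimately have "par (w a1) (w a2)" using par_trans by blast
        with a12 show False by simp
      qed
      moreover have "A1 \<subseteq> A" by (auto simp: A1_def)
      ultimately obtain h c d where h: "h \<noteq> 0" "h = lc H A1 c" "h = lc H (A - A1) d"
        using connH unfolding conn_def by blast
      have finA1: "finite A1" "finite (A - A1)" using \<open>finite A\<close> by (auto simp: A1_def)
      have g1: "\<forall>a\<in>A1. H a = lc H B (\<gamma> a)" using \<gamma> unfolding A1_def by blast
      have g2: "\<forall>a\<in>A - A1. H a = lc H B (\<gamma> a)" using \<gamma> by blast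
      have h1: "h = lc H B (\<lambda>b. \<Sum>a\<in>A1. c a * \<gamma> a b)"
        using h(2) lc_subst[OF finA1(1) finB g1, of c] by simp
      have h2: "h = lc H B (\<lambda>b. \<Sum>a\<in>A - A1. d a * \<gamma> a b)"
        using h(3) lc_subst[OF finA1(2) finB g2, of d] by simp
      have "lc H B (\<lambda>b. (\<Sum>a\<in>A1. c a * \<gamma> a b) - (\<Sum>a\<in>A - A1. d a * \<gamma> a b)) = 0"
        using h1 h2 by (simp add: lc_def fun_eq_iff sum_subtractf left_diff_distrib)
      from ind[unfolded indep_def, rule_format, OF this]
      have E: "\<forall>b\<in>B. (\<Sum>a\<in>A1. c a * \<gamma> a b) = (\<Sum>a\<in>A - A1. d a * \<gamma> a b)"
        by simp
      have "\<forall>b\<in>B. (\<Sum>a\<in>A1. c a * \<gamma> a b) = 0"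
      proof
        fix b assume bB: "b \<in> B"
        hence bA: "b \<in> A" using Suc.prems(3) by blast
        show "(\<Sum>a\<in>A1. c a * \<gamma> a b) = 0"
        proof (cases "par (w b) (w b0)")
          case True
          have "\<forall>a\<in>A - A1. \<gamma> a b = 0"
          proof (rule ballI, rule ccontr)
            fix a assume a: "a \<in> A - A1" "\<gamma> a b \<noteq> 0"
            have "par (w a) (w b)" using parw[of a b] bB a by blast
            hence "par (w a) (w b0)" by (rule par_trans) (rule True)
            with a show False by (auto simp: A1_def)
          qed
          hence "(\<Sum>a\<in>A - A1. d a * \<gamma> a b) = 0" by (simp add: sum.neutral)
          with E bB show ?thesis by simp
        next
          case False
          have "\<forall>a\<in>A1. \<gamma> a b = 0"
          proof (rule ballI, rule ccontr)
            fix a assume a: "a \<in> A1" "\<gamma> a b \<noteq> 0"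
            have aA: "a \<in> A" using a by (simp add: A1_def)
            have "par (w a) (w b)" using parw[of a b] bB a aA by blast
            hence "par (w b) (w a)" using wnz[OF aA] by (rule par_sym)
            moreover have "par (w a) (w b0)" using a by (simp add: A1_def)
            ultimately have "par (w b) (w b0)" by (rule par_trans)
            with False show False by simp
          qed
          thus ?thesis by simp
        qed
      qed
      hence "h = 0" using h1 lc_zero[of B] by simp
      with h(1) show False by simp
    qed
    then obtain e b0 where e: "lc H B e = 0" "b0 \<in> B" "e b0 \<noteq> 0"
      unfolding indep_def by blast
    define B' where "B' = B - {b0}"
    have spanB': "\<exists>c. H a = lc H B' c" if "a \<in> A" for a
    proof -
      from spanH[OF that] obtain g where "H a = lc H B g" by blast
      with lc_remove[OF finB e(2,1,3), of g] have "H a = lc H (B - {b0}) (\<lambda>b. g b - g b0 * e b / e b0)" by simp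
      thus ?thesis unfolding B'_def by blast
    qed
    have "card (Sset k v A) + 1 \<le> card B'"
    proof -
      have "B' \<subseteq> A" using Suc.prems(3) by (auto simp: B'_def)
      thus ?thesis using Suc.IH[OF nz _ \<open>B' \<subseteq> A\<close>] connH spanB' by (simp add: H_def)
    qed
    moreover have "card B' + 1 = card B"
    proof -
      have "card B > 0" using finB e(2) card_gt_0_iff by blast
      moreover have "card B' = card B - 1" unfolding B'_def using e(2) by (rule card_Diff_singleton)
      ultimately show ?thesis by simp
    qed
    moreover have "card (Sset (Suc k) v A) \<le> card (Sset k v A) + 1"
    proof -
      have "card (Sset (Suc k) v A) \<le> card (insert (Suc k) (Sset k v A))"
        using finS Ssub by (intro card_mono) auto
      also have "\<dots> \<le> card (Sset k v A) + 1" using finS by (simp add: card_insert_if)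
      finally show ?thesis .
    qed
    ultimately show ?thesis by simp
  qed
qed

lemma sum_fscale_lc: "(\<Sum>a\<in>X. fscale (c a) (g a)) = lc g X c"
proof (cases "finite X")
  case True
  then show ?thesis by (induction X rule: finite_induct) (auto simp: lc_def fscale_def fun_eq_iff)
next
  case False
  then show ?thesis by (simp add: lc_def fun_eq_iff)
qed

lemma lc_restrict: "finite X \<Longrightarrow> Y \<subseteq> X \<Longrightarrow> lc T Y c = lc T X (\<lambda>a. if a \<in> Y then c a else 0)"
proof -
  assume fin: "finite X" and sub: "Y \<subseteq> X"
  show ?thesis
  proof
    fix f
    have "(\<Sum>a\<in>X. (if a \<in> Y then c a else 0) * T a f) = (\<Sum>a\<in>X. if a \<in> Y then c a * T a f else 0)"
      by (rule sum.cong) auto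
    also have "\<dots> = (\<Sum>a\<in>X \<inter> Y. c a * T a f)" by (rule sum.inter_restrict[OF fin, symmetric])
    also have "X \<inter> Y = Y" using sub by blast
    finally show "lc T Y c f = lc T X (\<lambda>a. if a \<in> Y then c a else 0) f" by (simp add: lc_def)
  qed
qed

theorem corollary1:
  fixes n m :: nat and x :: "nat \<Rightarrow> nat \<Rightarrow> 'b \<Rightarrow> 'a::field" and \<alpha> :: "nat \<Rightarrow> 'a"
  assumes "n > 0" and "m > 0"
    and "\<forall>a\<in>{1..n}. \<forall>j\<in>{1..m}. x a j \<noteq> 0"
    and "lin_indep_family {1..n} (\<lambda>a. tensor m (x a))"
    and "\<forall>a\<in>{1..n}. \<alpha> a \<noteq> 0"
    and "product_vector m (\<Sum>a\<in>{1..n}. fscale (\<alpha> a) (tensor m (x a)))"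
  shows "card {j\<in>{1..m}. vector_space.dim fscale
                 (module.span fscale {x a j | a. a \<in> {1..n}}) > 1} \<le> n - 1"
proof -
  obtain y where y: "\<forall>j\<in>{1..m}. y j \<noteq> 0"
    and z: "(\<Sum>a\<in>{1..n}. fscale (\<alpha> a) (tensor m (x a))) = tensor m y"
    using assms(6) unfolding product_vector_def by blast
  define v where "v = (\<lambda>a. if a = 0 then y else x a)"
  define T where "T = (\<lambda>a. tensor m (v a))"
  have Tx: "T a = tensor m (x a)" if "a \<in> {1..n}" for a using that by (simp add: T_def v_def)
  have lcx: "lc T Y c = lc (\<lambda>a. tensor m (x a)) Y c" if "Y \<subseteq> {1..n}" for Y c
  proof -
    have "\<forall>a\<in>Y. T a = tensor m (x a)" using Tx that by blast
    thus ?thesis unfolding lc_def by (intro ext sum.cong) auto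
  qed
  have T0: "T 0 = lc T {1..n} \<alpha>"
    using z lcx[of "{1..n}" \<alpha>] by (simp add: T_def v_def sum_fscale_lc)
  have ind: "\<forall>a\<in>Y. c a = 0" if "Y \<subseteq> {1..n}" "lc T Y c = 0" for Y c
  proof -
    have "lc T {1..n} (\<lambda>a. if a \<in> Y then c a else 0) = 0"
      using that lc_restrict[of "{1..n}" Y T c] by simp
    hence "lc (\<lambda>a. tensor m (x a)) {1..n} (\<lambda>a. if a \<in> Y then c a else 0) = 0"
      using lcx by simp
    hence "\<forall>a\<in>{1..n}. (if a \<in> Y then c a else 0) = 0"
      using assms(4) unfolding lin_indep_family_def sum_fscale_lc by blast
    thus ?thesis using that(1) by (metis subsetD)
  qed
  define \<kappa> where "\<kappa> = (\<lambda>a::nat. if a = 0 then -1 else \<alpha> a)"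
  have rel: "lc T {0..n} \<kappa> = 0"
  proof -
    have "{0..n} = insert 0 {1..n}" by auto
    hence "lc T {0..n} \<kappa> = (\<lambda>f. - T 0 f + lc T {1..n} \<kappa> f)"
      by (simp add: lc_def \<kappa>_def)
    also have "lc T {1..n} \<kappa> = lc T {1..n} \<alpha>" unfolding lc_def \<kappa>_def by (auto intro!: sum.cong)
    finally show ?thesis using T0 by (simp add: fun_eq_iff)
  qed
  have conn: "conn {0..n} T"
    unfolding conn_def
  proof (intro allI impI)
    fix A1 assume A1: "A1 \<subseteq> {0..n}" "A1 \<noteq> {}" "A1 \<noteq> {0..n}"
    define g where "g = lc T A1 \<kappa>"
    have split: "lc T {0..n} \<kappa> = (\<lambda>f. lc T A1 \<kappa> f + lc T ({0..n} - A1) \<kappa> f)"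
      unfolding lc_def fun_eq_iff
      using sum.subset_diff[OF A1(1), of "\<lambda>a. \<kappa> a * T a _"] by (simp add: add.commute)
    have g2: "g = lc T ({0..n} - A1) (\<lambda>a. - \<kappa> a)"
      using rel split unfolding g_def by (simp add: lc_def fun_eq_iff sum_negf eq_neg_iff_add_eq_0)
    have "g \<noteq> 0"
    proof
      assume g0: "g = 0"
      show False
      proof (cases "0 \<in> A1")
        case False
        hence "A1 \<subseteq> {1..n}" using A1(1) by (auto simp: subset_iff Suc_le_eq) (metis atLeastAtMost_iff gr0I)
        from ind[OF this] g0 have "\<forall>a\<in>A1. \<kappa> a = 0" unfolding g_def by simp
        moreover obtain a where "a \<in> A1" using A1(2) by blast
        ultimately show False using \<open>A1 \<subseteq> {1..n}\<close> assms(5) unfolding \<kappa>_def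
          by (metis atLeastAtMost_iff not_one_le_zero subsetD)
      next
        case True
        hence sub: "{0..n} - A1 \<subseteq> {1..n}" by (auto simp: Suc_le_eq) (metis gr0I)
        from g0 g2 have "lc T ({0..n} - A1) (\<lambda>a. - \<kappa> a) = 0" by simp
        from ind[OF sub this] have "\<forall>a\<in>{0..n} - A1. - \<kappa> a = 0" by blast
        moreover have "{0..n} - A1 \<noteq> {}" using A1(1,3) by (metis Diff_eq_empty_iff subset_antisym)
        then obtain a where a: "a \<in> {0..n} - A1" by blast
        ultimately have "- \<kappa> a = 0" by blast
        moreover have a1: "a \<in> {1..n}" using sub a by blast
        ultimately have "\<alpha> a = 0" by (simp add: \<kappa>_def)
        with a1 assms(5) show False by blast
      qed
    qed
    thus "\<exists>g. g \<noteq> 0 \<and> (\<exists>c. g = lc T A1 c) \<and> (\<exists>d. g = lc T ({0..n} - A1) d)"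
      using g2 unfolding g_def by blast
  qed
  have span: "\<forall>a\<in>{0..n}. \<exists>c. T a = lc T {1..n} c"
  proof
    fix a assume a: "a \<in> {0..n}"
    show "\<exists>c. T a = lc T {1..n} c"
    proof (cases "a = 0")
      case True thus ?thesis using T0 by blast
    next
      case False
      hence "a \<in> {1..n}" using a by auto
      hence "T a = lc T {1..n} (\<lambda>b. if b = a then 1 else 0)"
      proof (intro ext)
        fix f
        have "lc T {1..n} (\<lambda>b. if b = a then 1 else 0) f = (\<Sum>b\<in>{1..n}. if b = a then T b f else 0)"
          unfolding lc_def by (rule sum.cong) auto
        also have "\<dots> = T a f" using \<open>a \<in> {1..n}\<close> by (simp add: sum.delta)
        finally show "T a f = lc T {1..n} (\<lambda>b. if b = a then 1 else 0) f" by simp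
      qed
      thus ?thesis by blast
    qed
  qed
  have nzv: "\<forall>a\<in>{0..n}. \<forall>j\<in>{1..m}. v a j \<noteq> 0"
  proof (intro ballI)
    fix a j assume a: "a \<in> {0..n}" and j: "j \<in> {1..m}"
    show "v a j \<noteq> 0"
    proof (cases "a = 0")
      case True thus ?thesis using y j by (simp add: v_def)
    next
      case False
      hence "a \<in> {1..n}" using a by simp
      thus ?thesis using assms(3) j False by (simp add: v_def)
    qed
  qed
  have main: "card (Sset m v {0..n}) + 1 \<le> card {1..n}"
  proof -
    have c: "conn {0..n} (\<lambda>a. tensor m (v a))" using conn unfolding T_def .
    have s: "\<forall>a\<in>{0..n}. \<exists>c. tensor m (v a) = lc (\<lambda>a. tensor m (v a)) {1..n} c"
      using span unfolding T_def .
    show ?thesis by (rule core[OF _ _ nzv c _ s]) auto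
  qed
  interpret V: vector_space "fscale :: 'a \<Rightarrow> ('b \<Rightarrow> 'a) \<Rightarrow> ('b \<Rightarrow> 'a)"
    by (rule vector_space_fscale)
  have sub: "{j\<in>{1..m}. V.dim (V.span {x a j | a. a \<in> {1..n}}) > 1} \<subseteq> Sset m v {0..n}"
  proof
    fix j assume j: "j \<in> {j\<in>{1..m}. V.dim (V.span {x a j | a. a \<in> {1..n}}) > 1}"
    show "j \<in> Sset m v {0..n}"
    proof (rule ccontr)
      assume "j \<notin> Sset m v {0..n}"
      moreover have jm: "j \<in> {1..m}" using j by simp
      ultimately have allp: "\<forall>a\<in>{0..n}. \<forall>b\<in>{0..n}. par (v a j) (v b j)"
        unfolding Sset_def by simp
      have one: "1 \<in> {1..n}" using assms(1) by auto
      have "{x a j | a. a \<in> {1..n}} \<subseteq> V.span {x 1 j}"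
      proof
        fix u assume "u \<in> {x a j | a. a \<in> {1..n}}"
        then obtain a where a: "a \<in> {1..n}" "u = x a j" by blast
        have a0: "a \<in> {0..n}" "a \<noteq> 0" using a(1) by auto
        have o0: "(1::nat) \<in> {0..n}" using one by simp
        have "par (v a j) (v 1 j)" using allp a0(1) o0 by blast
        hence "par (x a j) (x 1 j)" using a0(2) by (simp add: v_def)
        then obtain c where "x a j = (\<lambda>t. c * x 1 j t)" unfolding par_def by blast
        hence "u = fscale c (x 1 j)" using a(2) by (simp add: fscale_def)
        thus "u \<in> V.span {x 1 j}" by (simp add: V.span_base V.span_scale)
      qed
      hence "V.dim {x a j | a. a \<in> {1..n}} \<le> card {x 1 j}" by (rule V.dim_le_card) simp
      also have "\<dots> \<le> 1" by simp
      finally show False using j by simp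
    qed
  qed
  have "card {j\<in>{1..m}. V.dim (V.span {x a j | a. a \<in> {1..n}}) > 1} \<le> card (Sset m v {0..n})"
    by (rule card_mono[OF _ sub]) (simp add: Sset_def)
  thus ?thesis using main by simp
qed

end
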